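(* Let $d$ be a compatible metric on the Cantor space $\mathbf{C}$ and let $h:\mathbf{C}\to\mathbf{C}$ be an isometry of $(\mathbf{C},d)$. Then for every clopen set $U\subseteq\mathbf{C}$ there exists a positive integer $l$ such that $h^l(U)=U$.
   Context: $\mathbf{C}$ denotes the Cantor space. *)

theory Defs
  imports "HOL-Analysis.Analysis"
begin

definition cantor_space :: "(nat \<Rightarrow> bool) topology" where
  "cantor_space = product_topology (\<lambda>_. discrete_topology (UNIV :: bool set)) UNIV"

definition compatible_metric :: "((nat \<Rightarrow> bool) \<Rightarrow> (nat \<Rightarrow> bool) \<Rightarrow> real) \<Rightarrow> bool" where
  "compatible_metric d \<longleftrightarrow> Metric_space UNIV d \<and> Metric_space.mtopology UNIV d = cantor_space"

end

theory Submission
  imports Defs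
begin

lemma (in Metric_space) clopen_sep:
  assumes "compactin mtopology U" "openin mtopology U"
  shows "\<exists>e>0. \<forall>a\<in>U. \<forall>y\<in>M. d a y < e \<longrightarrow> y \<in> U"
proof -
  have "\<forall>a\<in>U. \<exists>r>0. mball a r \<subseteq> U" using assms(2) openin_mtopology by blast
  then obtain r where r: "\<And>a. a \<in> U \<Longrightarrow> r a > 0 \<and> mball a (r a) \<subseteq> U" by metis
  have UM: "U \<subseteq> M" using assms(2) openin_mtopology by blast
  have "U \<subseteq> \<Union> ((\<lambda>a. mball a (r a / 2)) ` U)"
    using r UM by fastforce
  moreover have "\<forall>V\<in>(\<lambda>a. mball a (r a / 2)) ` U. openin mtopology V" by auto
  ultimately obtain F where F: "finite F" "F \<subseteq> (\<lambda>a. mball a (r a / 2)) ` U"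
      "U \<subseteq> \<Union>F"
    using assms(1) unfolding compactin_def by meson
  then obtain K where K: "K \<subseteq> U" "finite K" "F = (\<lambda>a. mball a (r a / 2)) ` K"
    by (meson finite_subset_image)
  define e where "e = Min (insert 1 ((\<lambda>a. r a / 2) ` K))"
  have epos: "e > 0" unfolding e_def using K r by (subst Min_gr_iff) auto
  have ele: "e \<le> r a / 2" if "a \<in> K" for a
  proof -
    have "r a / 2 \<in> insert 1 ((\<lambda>a. r a / 2) ` K)" using that by simp
    moreover have "finite (insert 1 ((\<lambda>a. r a / 2) ` K))" using K(2) by simp
    ultimately show ?thesis unfolding e_def by (rule Min_le[rotated])
  qed
  show ?thesis
  proof (intro exI[of _ e] conjI epos ballI impI)
    fix x y assume x: "x \<in> U" and y: "y \<in> M" and dxy: "d x y < e"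
    obtain a where a: "a \<in> K" "x \<in> mball a (r a / 2)" using x F K by auto
    have "d a y \<le> d a x + d x y" using a y UM K by (intro triangle) auto
    also have "\<dots> < r a" using a ele[OF a(1)] dxy by auto
    finally have "y \<in> mball a (r a)" using a y by auto
    then show "y \<in> U" using r a K by blast
  qed
qed

theorem proposition6p2:
  fixes d :: "(nat \<Rightarrow> bool) \<Rightarrow> (nat \<Rightarrow> bool) \<Rightarrow> real"
    and h :: "(nat \<Rightarrow> bool) \<Rightarrow> (nat \<Rightarrow> bool)"
    and U :: "(nat \<Rightarrow> bool) set"
  assumes "compatible_metric d"
    and "bij h"
    and "\<forall>x y. d (h x) (h y) = d x y"
    and "openin cantor_space U" and "closedin cantor_space U"
  shows "\<exists>l::nat. l > 0 \<and> (h ^^ l) ` U = U"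
proof -
  interpret M: Metric_space UNIV d using assms(1) unfolding compatible_metric_def by blast
  have top: "M.mtopology = cantor_space" using assms(1) unfolding compatible_metric_def by blast
  have cs: "compact_space cantor_space"
    unfolding cantor_space_def
    by (simp add: compact_space_product_topology compact_space_discrete_topology)
  have cU: "compactin M.mtopology U" using closedin_compact_space[OF cs assms(5)] top by simp
  obtain e where e: "e > 0" "\<And>a y. a \<in> U \<Longrightarrow> d a y < e \<Longrightarrow> y \<in> U"
    using M.clopen_sep[OF cU] assms(4) top by auto
  have "compactin M.mtopology UNIV" proof -
    have "topspace cantor_space = UNIV" using M.topspace_mtopology unfolding top .
    then have "compactin cantor_space UNIV" using cs unfolding compact_space_def by simp
    then show ?thesis using top by simp
  qed
  then have tb: "M.mtotally_bounded UNIV" by (rule M.compactin_imp_mtotally_bounded)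
  obtain N where N: "finite N" "UNIV \<subseteq> (\<Union>x\<in>N. M.mball x e)"
    using tb[unfolded M.mtotally_bounded_def, rule_format, OF e(1)] by blast
  have iso: "d ((h^^n) x) ((h^^n) y) = d x y" for n x y
    by (induction n) (auto simp: assms(3))
  define V where "V n = (h^^n) ` U" for n
  have sep: "d x y \<ge> e" if xV: "x \<in> V n" and yV: "y \<notin> V n" for x y n
  proof (rule ccontr)
    assume "\<not> d x y \<ge> e"
    then have lt: "d x y < e" by simp
    obtain a where a: "a \<in> U" "x = (h^^n) a" using xV V_def by auto
    obtain b where b: "y = (h^^n) b" using surjD[OF bij_is_surj[OF bij_fn[OF assms(2), of n]]] by blast
    have "d a b < e" using lt a b iso by simp
    then have "b \<in> U" using e a by blast
    then show False using yV b V_def by auto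
  qed
  have det: "V i = V j" if eqN: "V i \<inter> N = V j \<inter> N" for i j
  proof -
    have "x \<in> V i \<longleftrightarrow> x \<in> V j" for x
    proof -
      have "x \<in> (\<Union>x\<in>N. M.mball x e)" using N by blast
      then obtain m where m: "m \<in> N" "d m x < e" by auto
      have "x \<in> V k \<longleftrightarrow> m \<in> V k" for k
      proof
        assume "x \<in> V k" then show "m \<in> V k" using sep[of x k m] m(2) M.commute[of m x] by fastforce
      next
        assume "m \<in> V k" then show "x \<in> V k" using sep[of m k x] m(2) by fastforce
      qed
      then show ?thesis using eqN m by blast
    qed
    then show ?thesis by blast
  qed
  have "\<not> inj (\<lambda>n. V n \<inter> N)"
  proof
    assume "inj (\<lambda>n. V n \<inter> N)"
    moreover have "range (\<lambda>n. V n \<inter> N) \<subseteq> Pow N" by auto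
    ultimately have "finite (UNIV :: nat set)"
    proof -
      have "finite (range (\<lambda>n. V n \<inter> N))" using N(1) \<open>range (\<lambda>n. V n \<inter> N) \<subseteq> Pow N\<close>
        by (meson finite_Pow_iff finite_subset)
      then show ?thesis using \<open>inj (\<lambda>n. V n \<inter> N)\<close> by (rule finite_imageD)
    qed
    then show False by simp
  qed
  then obtain i j where ij: "i \<noteq> j" "V i = V j" using det unfolding inj_def by blast
  have main: "(h ^^ (j - i)) ` U = U" if "i < j" "V i = V j" for i j
  proof -
    have "(h^^i) ` ((h^^(j-i)) ` U) = (h^^i) ` U"
      using that unfolding V_def by (simp add: image_comp funpow_add[symmetric])
    then show ?thesis by (simp add: inj_image_eq_iff[OF bij_is_inj[OF bij_fn[OF assms(2)]]])
  qed
  show ?thesis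
  proof (cases "i < j")
    case True then show ?thesis using main ij by (intro exI[of _ "j - i"]) auto
  next
    case False then have "j < i" using ij by simp
    then show ?thesis using main ij by (intro exI[of _ "i - j"]) auto
  qed
qed

end
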